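(* Let $R=K[x_1,\ldots,x_n,x_{n+1}]$ over a field $K$, let $I\subset R$ be a monomial ideal with $\gcd(u,x_{n+1})=1$ for all $u\in\mathcal{G}(I)$, let $\mathfrak{m}=(x_1,\ldots,x_{n+1})$ and $\mathfrak{q}=(x_1,\ldots,x_n)$, assume $I\neq\mathfrak{q}$, and set $L:=I+x_{n+1}\mathfrak{q}$. Suppose that $(I^t:v)=\mathfrak{q}$ for some $t\geq1$ and some monomial $v\in R$, and that there is $\lambda\in\{1,\ldots,n\}$ such that whenever $x_\lambda v=f_1\cdots f_tM$ with $f_1,\ldots,f_t\in\mathcal{G}(I)$ and $M$ a monomial of $R$, there is an index $j$ with $x_\lambda\mid Mf_j$ and $Mf_j/x_\lambda\neq1$. Then $\mathfrak{m}\in\mathrm{Ass}(R/L^t)$.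
   Context: $\mathcal{G}(I)$ denotes the unique minimal set of monomial generators of a monomial ideal $I$. *)

theory Defs
  imports Main "HOL-Library.Poly_Mapping"
begin

type_synonym 'a mpoly = "(nat \<Rightarrow>\<^sub>0 nat) \<Rightarrow>\<^sub>0 'a"

definition polyR :: "nat \<Rightarrow> 'a::field mpoly set" where
  "polyR N = {p :: 'a mpoly. \<forall>m\<in>Poly_Mapping.keys p. Poly_Mapping.keys m \<subseteq> {1..N}}"

definition monom :: "(nat \<Rightarrow>\<^sub>0 nat) \<Rightarrow> 'a::field mpoly" where
  "monom a = Poly_Mapping.single a 1"

definition Var :: "nat \<Rightarrow> 'a::field mpoly" where
  "Var i = monom (Poly_Mapping.single i 1)"

definition is_ideal :: "'a::field mpoly set \<Rightarrow> 'a mpoly set \<Rightarrow> bool" where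
  "is_ideal R I \<longleftrightarrow> I \<subseteq> R \<and> 0 \<in> I \<and> (\<forall>a\<in>I. \<forall>b\<in>I. a + b \<in> I)
      \<and> (\<forall>r\<in>R. \<forall>a\<in>I. r * a \<in> I)"

definition ideal_gen :: "'a::field mpoly set \<Rightarrow> 'a mpoly set \<Rightarrow> 'a mpoly set" where
  "ideal_gen R S = \<Inter>{I. is_ideal R I \<and> S \<subseteq> I}"

definition ideal_prod :: "'a::field mpoly set \<Rightarrow> 'a mpoly set \<Rightarrow> 'a mpoly set \<Rightarrow> 'a mpoly set" where
  "ideal_prod R I J = ideal_gen R {a * b | a b. a \<in> I \<and> b \<in> J}"

fun ideal_pow :: "'a::field mpoly set \<Rightarrow> 'a mpoly set \<Rightarrow> nat \<Rightarrow> 'a mpoly set" where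
  "ideal_pow R I 0 = R"
| "ideal_pow R I (Suc t) = ideal_prod R (ideal_pow R I t) I"

definition colon :: "'a::field mpoly set \<Rightarrow> 'a mpoly set \<Rightarrow> 'a mpoly \<Rightarrow> 'a mpoly set" where
  "colon R J f = {g \<in> R. g * f \<in> J}"

definition prime_ideal :: "'a::field mpoly set \<Rightarrow> 'a mpoly set \<Rightarrow> bool" where
  "prime_ideal R P \<longleftrightarrow> is_ideal R P \<and> P \<noteq> R \<and>
      (\<forall>a\<in>R. \<forall>b\<in>R. a * b \<in> P \<longrightarrow> a \<in> P \<or> b \<in> P)"

text \<open>Associated primes of R/J: primes of the form (J : f) = Ann(f + J), f in R.\<close>
definition Ass :: "'a::field mpoly set \<Rightarrow> 'a mpoly set \<Rightarrow> 'a mpoly set set" where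
  "Ass R J = {P. prime_ideal R P \<and> (\<exists>f\<in>R. colon R J f = P)}"

definition mdvd :: "(nat \<Rightarrow>\<^sub>0 nat) \<Rightarrow> (nat \<Rightarrow>\<^sub>0 nat) \<Rightarrow> bool" where
  "mdvd a b \<longleftrightarrow> (\<forall>i. Poly_Mapping.lookup a i \<le> Poly_Mapping.lookup b i)"

definition is_monomial_ideal :: "nat \<Rightarrow> 'a::field mpoly set \<Rightarrow> bool" where
  "is_monomial_ideal N I \<longleftrightarrow> is_ideal (polyR N) I \<and>
     I = ideal_gen (polyR N) {monom a | a. Poly_Mapping.keys a \<subseteq> {1..N} \<and> monom a \<in> I}"

definition mingens :: "nat \<Rightarrow> 'a::field mpoly set \<Rightarrow> (nat \<Rightarrow>\<^sub>0 nat) set" where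
  "mingens N I = {a. Poly_Mapping.keys a \<subseteq> {1..N} \<and> monom a \<in> I \<and>
     (\<forall>b. Poly_Mapping.keys b \<subseteq> {1..N} \<and> (monom b :: 'a mpoly) \<in> I \<and> mdvd b a \<longrightarrow> b = a)}"

end

theory Submission
  imports Defs
begin


abbreviation uv :: "nat \<Rightarrow> nat \<Rightarrow>\<^sub>0 nat" where "uv i \<equiv> Poly_Mapping.single i 1"

lemma lookup_single_if: "Poly_Mapping.lookup (Poly_Mapping.single i c) j = (if i = j then c else 0)"
  by (simp add: lookup_single when_def)

definition kok :: "nat \<Rightarrow> (nat \<Rightarrow>\<^sub>0 nat) \<Rightarrow> bool" where
  "kok N m \<longleftrightarrow> Poly_Mapping.keys m \<subseteq> {1..N}"

definition MIs :: "nat \<Rightarrow> (nat \<Rightarrow>\<^sub>0 nat) set \<Rightarrow> 'a::field mpoly set" where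
  "MIs N S = {p \<in> polyR N. \<forall>k\<in>Poly_Mapping.keys p. \<exists>s\<in>S. mdvd s k}"

definition msum :: "(nat \<Rightarrow>\<^sub>0 nat) set \<Rightarrow> (nat \<Rightarrow>\<^sub>0 nat) set \<Rightarrow> (nat \<Rightarrow>\<^sub>0 nat) set" where
  "msum S T = {a + b | a b. a \<in> S \<and> b \<in> T}"

fun sp :: "(nat \<Rightarrow>\<^sub>0 nat) set \<Rightarrow> nat \<Rightarrow> (nat \<Rightarrow>\<^sub>0 nat) set" where
  "sp S 0 = {0}"
| "sp S (Suc t) = msum (sp S t) S"

lemma mdvd_refl: "mdvd a a" by (simp add: mdvd_def)
lemma mdvd_trans: "mdvd a b \<Longrightarrow> mdvd b c \<Longrightarrow> mdvd a c"
  unfolding mdvd_def using le_trans by blast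
lemma mdvd_add: "mdvd a b \<Longrightarrow> mdvd c d \<Longrightarrow> mdvd (a + c) (b + d)"
  unfolding mdvd_def by (simp add: lookup_add add_mono)
lemma mdvd_addR: "mdvd a b \<Longrightarrow> mdvd a (b + d)"
  unfolding mdvd_def by (simp add: lookup_add add_increasing2)
lemma mdvd_0: "mdvd 0 a" by (simp add: mdvd_def)

lemma keys_add_kok: "kok N a \<Longrightarrow> kok N b \<Longrightarrow> kok N (a + b)"
  unfolding kok_def using keys_add[of a b] by (meson order_trans sup.boundedI)

lemma mdvd_kok: assumes "mdvd a b" "kok N b" shows "kok N a"
proof -
  have "Poly_Mapping.keys a \<subseteq> Poly_Mapping.keys b"
  proof
    fix i assume "i \<in> Poly_Mapping.keys a"
    then have "Poly_Mapping.lookup a i \<noteq> 0" by (simp add: in_keys_iff)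
    moreover have "Poly_Mapping.lookup a i \<le> Poly_Mapping.lookup b i" using assms(1) by (simp add: mdvd_def)
    ultimately show "i \<in> Poly_Mapping.keys b" by (simp add: in_keys_iff)
  qed
  then show ?thesis using assms(2) by (simp add: kok_def)
qed

lemma mdvd_minus: "mdvd s k \<Longrightarrow> s + (k - s) = k"
  unfolding mdvd_def by (rule poly_mapping_eqI) (simp add: lookup_add lookup_minus)

lemma kok_minus: "kok N k \<Longrightarrow> kok N (k - s)"
  unfolding kok_def by (auto simp: in_keys_iff lookup_minus)

lemma polyR_add: "p \<in> polyR N \<Longrightarrow> q \<in> polyR N \<Longrightarrow> p + q \<in> polyR N"
  unfolding polyR_def
proof (intro CollectI ballI)
  fix m assume "p \<in> {p. \<forall>m\<in>Poly_Mapping.keys p. Poly_Mapping.keys m \<subseteq> {1..N}}" "q \<in> {p. \<forall>m\<in>Poly_Mapping.keys p. Poly_Mapping.keys m \<subseteq> {1..N}}"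
    "m \<in> Poly_Mapping.keys (p + q)"
  moreover have "m \<in> Poly_Mapping.keys p \<union> Poly_Mapping.keys q" using keys_add[of p q] \<open>m \<in> Poly_Mapping.keys (p + q)\<close> by blast
  ultimately show "Poly_Mapping.keys m \<subseteq> {1..N}" by auto
qed

lemma polyR_mult: "p \<in> polyR N \<Longrightarrow> q \<in> polyR N \<Longrightarrow> p * q \<in> polyR N"
  unfolding polyR_def
proof (intro CollectI ballI)
  fix m assume p: "p \<in> {p. \<forall>m\<in>Poly_Mapping.keys p. Poly_Mapping.keys m \<subseteq> {1..N}}" and q: "q \<in> {p. \<forall>m\<in>Poly_Mapping.keys p. Poly_Mapping.keys m \<subseteq> {1..N}}"
    and m: "m \<in> Poly_Mapping.keys (p * q)"
  then obtain a b where "m = a + b" "a \<in> Poly_Mapping.keys p" "b \<in> Poly_Mapping.keys q" using keys_mult by blast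
  moreover have "Poly_Mapping.keys a \<subseteq> {1..N}" "Poly_Mapping.keys b \<subseteq> {1..N}"
    using p q \<open>a \<in> Poly_Mapping.keys p\<close> \<open>b \<in> Poly_Mapping.keys q\<close> by auto
  ultimately show "Poly_Mapping.keys m \<subseteq> {1..N}" using keys_add[of a b] by auto
qed

lemma polyR_zero: "0 \<in> polyR N" by (simp add: polyR_def)

lemma is_ideal_polyR: "is_ideal (polyR N) (polyR N)"
  by (simp add: is_ideal_def polyR_zero polyR_add polyR_mult)

lemma ideal_gen_least: "S \<subseteq> J \<Longrightarrow> is_ideal R J \<Longrightarrow> ideal_gen R S \<subseteq> J"
  unfolding ideal_gen_def by blast

lemma ideal_gen_sup: "S \<subseteq> ideal_gen R S"
  unfolding ideal_gen_def by blast

lemma ideal_gen_ideal: fixes S :: "'a::field mpoly set" assumes S: "S \<subseteq> polyR N" shows "is_ideal (polyR N) (ideal_gen (polyR N) S)"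
proof -
  let ?F = "{I. is_ideal (polyR N) I \<and> S \<subseteq> I}"
  have F: "polyR N \<in> ?F" using S is_ideal_polyR[of N] by simp
  have sub: "\<Inter>?F \<subseteq> polyR N" using F by (rule Inter_lower)
  have z: "0 \<in> \<Inter>?F" unfolding is_ideal_def by simp
  have a: "\<forall>a\<in>\<Inter>?F. \<forall>b\<in>\<Inter>?F. a + b \<in> \<Inter>?F"
  proof (intro ballI InterI)
    fix a b :: "'a mpoly" and I assume "a \<in> \<Inter>?F" "b \<in> \<Inter>?F" "I \<in> ?F"
    then have "a \<in> I" "b \<in> I" "is_ideal (polyR N) I" by auto
    then show "a + b \<in> I" unfolding is_ideal_def by simp
  qed
  have m: "\<forall>r\<in>polyR N. \<forall>a\<in>\<Inter>?F. r * a \<in> \<Inter>?F"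
  proof (intro ballI InterI)
    fix r a :: "'a mpoly" and I assume "r \<in> polyR N" "a \<in> \<Inter>?F" "I \<in> ?F"
    then have "r \<in> polyR N" "a \<in> I" "is_ideal (polyR N) I" by auto
    then show "r * a \<in> I" unfolding is_ideal_def by simp
  qed
  show ?thesis unfolding ideal_gen_def is_ideal_def[of "polyR N" "\<Inter>?F"] using sub z a m by (intro conjI) assumption+
qed

lemma ideal_sum: assumes "is_ideal R J" "finite A" "\<And>x. x \<in> A \<Longrightarrow> f x \<in> J" shows "sum f A \<in> J"
  using assms(2,3) by (induction A rule: finite_induct) (use assms(1) in \<open>auto simp: is_ideal_def\<close>)

lemma monom_mult: "monom a * monom b = (monom (a + b) :: 'a::field mpoly)"
  by (simp add: monom_def mult_single)

lemma keys_monom[simp]: "Poly_Mapping.keys (monom a :: 'a::field mpoly) = {a}"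
  by (simp add: monom_def)

lemma monom_polyR: "kok N a \<Longrightarrow> monom a \<in> polyR N"
  by (simp add: polyR_def kok_def)

lemma MIs_ideal: "is_ideal (polyR N) (MIs N S :: 'a::field mpoly set)"
proof -
  have s: "MIs N S \<subseteq> (polyR N :: 'a mpoly set)" unfolding MIs_def by (rule Collect_restrict)
  have z: "(0::'a mpoly) \<in> MIs N S" by (simp add: MIs_def polyR_zero)
  have a: "\<forall>a\<in>MIs N S. \<forall>b\<in>MIs N S. (a::'a mpoly) + b \<in> MIs N S"
  proof (intro ballI)
    fix a b :: "'a mpoly" assume a: "a \<in> MIs N S" and b: "b \<in> MIs N S"
    have "a + b \<in> polyR N" using a b by (simp add: MIs_def polyR_add)
    moreover have "\<forall>k\<in>Poly_Mapping.keys (a + b). \<exists>s\<in>S. mdvd s k"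
    proof
      fix k assume "k \<in> Poly_Mapping.keys (a + b)"
      then have "k \<in> Poly_Mapping.keys a \<or> k \<in> Poly_Mapping.keys b" using keys_add[of a b] by auto
      then show "\<exists>s\<in>S. mdvd s k" using a b by (auto simp: MIs_def)
    qed
    ultimately show "a + b \<in> MIs N S" by (simp add: MIs_def)
  qed
  have m: "\<forall>r\<in>polyR N. \<forall>a\<in>MIs N S. (r::'a mpoly) * a \<in> MIs N S"
  proof (intro ballI)
    fix r a :: "'a mpoly" assume r: "r \<in> polyR N" and a: "a \<in> MIs N S"
    have "r * a \<in> polyR N" using a r by (simp add: MIs_def polyR_mult)
    moreover have "\<forall>k\<in>Poly_Mapping.keys (r * a). \<exists>s\<in>S. mdvd s k"
    proof
      fix k assume "k \<in> Poly_Mapping.keys (r * a)"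
      then obtain x y where xy: "k = x + y" "y \<in> Poly_Mapping.keys a" using keys_mult[of r a] by blast
      then obtain s where "s \<in> S" "mdvd s y" using a by (auto simp: MIs_def)
      then have "mdvd s k" using xy(1) mdvd_addR[of s y x] by (simp add: add.commute)
      then show "\<exists>s\<in>S. mdvd s k" using \<open>s \<in> S\<close> by blast
    qed
    ultimately show "r * a \<in> MIs N S" by (simp add: MIs_def)
  qed
  show ?thesis unfolding is_ideal_def using s z a m by (intro conjI) assumption+
qed

lemma MIs_mono: "S \<subseteq> T \<Longrightarrow> MIs N S \<subseteq> MIs N T"
  unfolding MIs_def by blast

lemma monom_MIs: "kok N s \<Longrightarrow> s \<in> S \<Longrightarrow> monom s \<in> MIs N S"
  by (auto simp: MIs_def monom_polyR intro: bexI[of _ s] mdvd_refl)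

lemma poly_decomp: "(p::'a::field mpoly) = (\<Sum>k\<in>Poly_Mapping.keys p. Poly_Mapping.single k (Poly_Mapping.lookup p k))"
proof (rule poly_mapping_eqI)
  fix x
  have "Poly_Mapping.lookup (\<Sum>k\<in>Poly_Mapping.keys p. Poly_Mapping.single k (Poly_Mapping.lookup p k)) x
     = (\<Sum>k\<in>Poly_Mapping.keys p. if k = x then Poly_Mapping.lookup p k else 0)"
    by (simp only: lookup_sum lookup_single_if)
  also have "\<dots> = Poly_Mapping.lookup p x"
    by (simp add: sum.delta' in_keys_iff)
  finally show "Poly_Mapping.lookup p x = Poly_Mapping.lookup (\<Sum>k\<in>Poly_Mapping.keys p. Poly_Mapping.single k (Poly_Mapping.lookup p k)) x" by simp
qed


lemma MIs_eq: "S \<subseteq> {s. kok N s} \<Longrightarrow> ideal_gen (polyR N) (monom ` S) = (MIs N S :: 'a::field mpoly set)"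
proof
  assume S: "S \<subseteq> {s. kok N s}"
  show "ideal_gen (polyR N) (monom ` S) \<subseteq> (MIs N S :: 'a mpoly set)"
    by (rule ideal_gen_least) (use S monom_MIs MIs_ideal in auto)
  have GI: "is_ideal (polyR N) (ideal_gen (polyR N) (monom ` S :: 'a mpoly set))"
    by (rule ideal_gen_ideal) (use S monom_polyR in auto)
  show "MIs N S \<subseteq> ideal_gen (polyR N) (monom ` S :: 'a mpoly set)"
  proof
    fix p :: "'a mpoly" assume p: "p \<in> MIs N S"
    have "(\<Sum>k\<in>Poly_Mapping.keys p. Poly_Mapping.single k (Poly_Mapping.lookup p k)) \<in> ideal_gen (polyR N) (monom ` S)"
    proof (rule ideal_sum[OF GI finite_keys])
      fix k assume k: "k \<in> Poly_Mapping.keys p"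
      then obtain s where s: "s \<in> S" "mdvd s k" using p by (auto simp: MIs_def)
      have kk: "kok N k" using p k by (auto simp: MIs_def polyR_def kok_def)
      have "Poly_Mapping.single k (Poly_Mapping.lookup p k) = Poly_Mapping.single (k - s) (Poly_Mapping.lookup p k) * monom s"
        by (simp add: monom_def mult_single mdvd_minus[OF s(2)] add.commute)
      moreover have "Poly_Mapping.single (k - s) (Poly_Mapping.lookup p k) \<in> polyR N"
        using kok_minus[OF kk] by (simp add: polyR_def kok_def)
      moreover have "monom s \<in> ideal_gen (polyR N) (monom ` S)" using s ideal_gen_sup by blast
      ultimately show "Poly_Mapping.single k (Poly_Mapping.lookup p k) \<in> ideal_gen (polyR N) (monom ` S)"
        using GI unfolding is_ideal_def by metis
    qed
    then show "p \<in> ideal_gen (polyR N) (monom ` S)" using poly_decomp[of p] by simp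
  qed
qed



lemma MIs_mult:
  fixes a b :: "'a::field mpoly"
  assumes a: "a \<in> MIs N S" and b: "b \<in> MIs N T"
  shows "a * b \<in> MIs N (msum S T)"
proof -
  have "a * b \<in> polyR N" using a b by (simp add: MIs_def polyR_mult)
  moreover have "\<forall>k\<in>Poly_Mapping.keys (a * b). \<exists>s\<in>msum S T. mdvd s k"
  proof
    fix k assume "k \<in> Poly_Mapping.keys (a * b)"
    then obtain x y where xy: "k = x + y" "x \<in> Poly_Mapping.keys a" "y \<in> Poly_Mapping.keys b"
      using keys_mult[of a b] by blast
    obtain s where s: "s \<in> S" "mdvd s x" using a xy(2) by (auto simp: MIs_def)
    obtain s' where s': "s' \<in> T" "mdvd s' y" using b xy(3) by (auto simp: MIs_def)
    have "s + s' \<in> msum S T" using s s' by (auto simp: msum_def)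
    moreover have "mdvd (s + s') k" using xy(1) s(2) s'(2) by (simp add: mdvd_add)
    ultimately show "\<exists>s\<in>msum S T. mdvd s k" by blast
  qed
  ultimately show ?thesis by (simp add: MIs_def)
qed

lemma msum_kok: "S \<subseteq> {s. kok N s} \<Longrightarrow> T \<subseteq> {s. kok N s} \<Longrightarrow> msum S T \<subseteq> {s. kok N s}"
  by (auto simp: msum_def intro!: keys_add_kok)

lemma ideal_gen_mono:
  fixes A B :: "'a::field mpoly set"
  assumes "A \<subseteq> ideal_gen (polyR N) B" "B \<subseteq> polyR N"
  shows "ideal_gen (polyR N) A \<subseteq> ideal_gen (polyR N) B"
  by (rule ideal_gen_least[OF assms(1) ideal_gen_ideal[OF assms(2)]])

lemma MIs_prod:
  assumes S: "S \<subseteq> {s. kok N s}" and T: "T \<subseteq> {s. kok N s}"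
  shows "ideal_prod (polyR N) (MIs N S) (MIs N T) = (MIs N (msum S T) :: 'a::field mpoly set)"
proof
  show "ideal_prod (polyR N) (MIs N S) (MIs N T) \<subseteq> (MIs N (msum S T) :: 'a mpoly set)"
    unfolding ideal_prod_def
    by (rule ideal_gen_least) (use MIs_mult MIs_ideal in blast)+
  have sub: "{a * b |a b. a \<in> (MIs N S :: 'a mpoly set) \<and> b \<in> MIs N T} \<subseteq> polyR N"
    by (auto simp: MIs_def polyR_mult)
  have "monom ` msum S T \<subseteq> {a * b |a b. a \<in> (MIs N S :: 'a mpoly set) \<and> b \<in> MIs N T}"
  proof
    fix x :: "'a mpoly" assume "x \<in> monom ` msum S T"
    then obtain s t where st: "s \<in> S" "t \<in> T" "x = monom (s + t)" by (auto simp: msum_def)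
    have "monom s \<in> (MIs N S :: 'a mpoly set)" using st S by (auto intro: monom_MIs)
    moreover have "monom t \<in> (MIs N T :: 'a mpoly set)" using st T by (auto intro: monom_MIs)
    ultimately show "x \<in> {a * b |a b. a \<in> (MIs N S :: 'a mpoly set) \<and> b \<in> MIs N T}"
      using st(3) monom_mult[of s t] by (metis (mono_tags, lifting) mem_Collect_eq)
  qed
  then have "monom ` msum S T \<subseteq> ideal_gen (polyR N) {a * b |a b. a \<in> (MIs N S :: 'a mpoly set) \<and> b \<in> MIs N T}"
    using ideal_gen_sup by blast
  then have "ideal_gen (polyR N) (monom ` msum S T) \<subseteq> ideal_prod (polyR N) (MIs N S) (MIs N T :: 'a mpoly set)"
    unfolding ideal_prod_def by (rule ideal_gen_mono[OF _ sub])
  then show "(MIs N (msum S T) :: 'a mpoly set) \<subseteq> ideal_prod (polyR N) (MIs N S) (MIs N T)"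
  proof -
    have "ideal_gen (polyR N) (monom ` msum S T) = (MIs N (msum S T) :: 'a mpoly set)"
      by (rule MIs_eq[OF msum_kok[OF S T]])
    then show ?thesis using \<open>ideal_gen (polyR N) (monom ` msum S T) \<subseteq> _\<close> by simp
  qed
qed

lemma sp_kok: "S \<subseteq> {s. kok N s} \<Longrightarrow> sp S t \<subseteq> {s. kok N s}"
proof (induction t)
  case 0 then show ?case by (simp add: kok_def)
next
  case (Suc t) then show ?case using msum_kok by simp
qed

lemma MIs_zero_set: "MIs N {0} = (polyR N :: 'a::field mpoly set)"
  by (auto simp: MIs_def mdvd_0)

lemma MIs_pow:
  assumes S: "S \<subseteq> {s. kok N s}"
  shows "ideal_pow (polyR N) (MIs N S) t = (MIs N (sp S t) :: 'a::field mpoly set)"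
proof (induction t)
  case 0 then show ?case by (simp add: MIs_zero_set)
next
  case (Suc t) then show ?case using MIs_prod[OF sp_kok[OF S] S] by simp
qed

lemma monom_MIs_iff: "kok N w \<Longrightarrow> (monom w \<in> (MIs N S :: 'a::field mpoly set)) = (\<exists>s\<in>S. mdvd s w)"
  by (auto simp: MIs_def monom_polyR)

lemma mult_monom_decomp:
  "(g::'a::field mpoly) * monom w = (\<Sum>k\<in>Poly_Mapping.keys g. Poly_Mapping.single (k + w) (Poly_Mapping.lookup g k))"
proof -
  have "g * monom w = (\<Sum>k\<in>Poly_Mapping.keys g. Poly_Mapping.single k (Poly_Mapping.lookup g k)) * monom w"
    using poly_decomp[of g] by simp
  also have "\<dots> = (\<Sum>k\<in>Poly_Mapping.keys g. Poly_Mapping.single k (Poly_Mapping.lookup g k) * monom w)"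
    by (rule sum_distrib_right)
  also have "\<dots> = (\<Sum>k\<in>Poly_Mapping.keys g. Poly_Mapping.single (k + w) (Poly_Mapping.lookup g k))"
    by (simp add: monom_def mult_single)
  finally show ?thesis .
qed

lemma lookup_mult_monom: "Poly_Mapping.lookup ((g::'a::field mpoly) * monom w) (k0 + w) = Poly_Mapping.lookup g k0"
proof -
  have "Poly_Mapping.lookup (g * monom w) (k0 + w)
      = (\<Sum>k\<in>Poly_Mapping.keys g. if k = k0 then Poly_Mapping.lookup g k else 0)"
    unfolding mult_monom_decomp by (simp add: lookup_sum lookup_single_if)
  also have "\<dots> = Poly_Mapping.lookup g k0"
    by (simp add: sum.delta' in_keys_iff)
  finally show ?thesis .
qed

lemma kok_nonzero_uv: assumes "kok N k" "k \<noteq> 0" shows "\<exists>i\<in>{1..N}. mdvd (uv i) k"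
proof -
  obtain i where i: "i \<in> Poly_Mapping.keys k" using assms(2) by (metis keys_eq_empty ex_in_conv)
  then have "i \<in> {1..N}" using assms(1) by (auto simp: kok_def)
  moreover have "mdvd (uv i) k" using i by (auto simp: mdvd_def lookup_single_if in_keys_iff)
  ultimately show ?thesis by blast
qed

lemma not_mdvd_uv_0: "\<not> mdvd (uv i) 0"
  unfolding mdvd_def by (metis lookup_single_eq lookup_zero not_one_le_zero)

abbreviation Mset :: "nat \<Rightarrow> (nat \<Rightarrow>\<^sub>0 nat) set" where "Mset N \<equiv> {uv i | i. i \<in> {1..N}}"

lemma colon_MIs:
  assumes w: "kok N w" and P: "\<not> (\<exists>p\<in>P. mdvd p w)"
    and Pi: "\<forall>i\<in>{1..N}. \<exists>p\<in>P. mdvd p (uv i + w)"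
  shows "colon (polyR N) (MIs N P) (monom w) = (MIs N (Mset N) :: 'a::field mpoly set)"
proof
  show "colon (polyR N) (MIs N P) (monom w) \<subseteq> (MIs N (Mset N) :: 'a mpoly set)"
  proof
    fix g :: "'a mpoly" assume "g \<in> colon (polyR N) (MIs N P) (monom w)"
    then have g: "g \<in> polyR N" "g * monom w \<in> MIs N P" by (auto simp: colon_def)
    have "\<forall>k\<in>Poly_Mapping.keys g. \<exists>s\<in>Mset N. mdvd s k"
    proof
      fix k assume k: "k \<in> Poly_Mapping.keys g"
      have "k \<noteq> 0"
      proof
        assume "k = 0"
        then have "Poly_Mapping.lookup (g * monom w) w \<noteq> 0"
          using k lookup_mult_monom[of g w 0] by (simp add: in_keys_iff)
        then have "w \<in> Poly_Mapping.keys (g * monom w)" by (simp add: in_keys_iff)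
        then show False using g(2) P by (auto simp: MIs_def)
      qed
      moreover have "kok N k" using g(1) k by (auto simp: polyR_def kok_def)
      ultimately show "\<exists>s\<in>Mset N. mdvd s k" using kok_nonzero_uv by blast
    qed
    then show "g \<in> MIs N (Mset N)" using g(1) by (simp add: MIs_def)
  qed
next
  show "(MIs N (Mset N) :: 'a mpoly set) \<subseteq> colon (polyR N) (MIs N P) (monom w)"
  proof
    fix g :: "'a mpoly" assume g: "g \<in> MIs N (Mset N)"
    have gw: "g * monom w \<in> polyR N" using g w by (simp add: MIs_def polyR_mult monom_polyR)
    have "\<forall>k\<in>Poly_Mapping.keys (g * monom w). \<exists>p\<in>P. mdvd p k"
    proof
      fix k assume "k \<in> Poly_Mapping.keys (g * monom w)"
      then obtain x where x: "k = x + w" "x \<in> Poly_Mapping.keys g"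
        using keys_mult[of g "monom w"] by auto
      obtain i where i: "i \<in> {1..N}" "mdvd (uv i) x" using g x(2) by (auto simp: MIs_def)
      obtain p where p: "p \<in> P" "mdvd p (uv i + w)" using Pi i(1) by blast
      have "mdvd (uv i + w) k" using x(1) i(2) by (simp add: mdvd_add mdvd_refl)
      then show "\<exists>p\<in>P. mdvd p k" using p mdvd_trans by blast
    qed
    then show "g \<in> colon (polyR N) (MIs N P) (monom w)"
      using g gw by (auto simp: colon_def MIs_def)
  qed
qed



lemma not_mdvd_uv_0' [simp]: "\<not> mdvd (Poly_Mapping.single i (Suc 0)) 0"
  using not_mdvd_uv_0[of i] by simp

lemma pm_add_eq_0: "(k + k' = (0::nat\<Rightarrow>\<^sub>0nat)) = (k = 0 \<and> k' = 0)"
  by (auto simp: poly_mapping_eq_iff lookup_add fun_eq_iff)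

lemma lookup_mult_zero:
  "Poly_Mapping.lookup ((a::'a::field mpoly) * b) 0 = Poly_Mapping.lookup a 0 * Poly_Mapping.lookup b 0"
proof -
  let ?la = "Poly_Mapping.lookup a" and ?lb = "Poly_Mapping.lookup b"
  have "a * b = (\<Sum>k\<in>Poly_Mapping.keys a. Poly_Mapping.single k (?la k)) * (\<Sum>k'\<in>Poly_Mapping.keys b. Poly_Mapping.single k' (?lb k'))"
    using poly_decomp[of a] poly_decomp[of b] by simp
  also have "\<dots> = (\<Sum>k\<in>Poly_Mapping.keys a. \<Sum>k'\<in>Poly_Mapping.keys b. Poly_Mapping.single k (?la k) * Poly_Mapping.single k' (?lb k'))"
    by (simp add: sum_product)
  finally have ab: "a * b = (\<Sum>k\<in>Poly_Mapping.keys a. \<Sum>k'\<in>Poly_Mapping.keys b. Poly_Mapping.single (k + k') (?la k * ?lb k'))"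
    by (simp add: mult_single)
  have "Poly_Mapping.lookup (a * b) 0 = (\<Sum>k\<in>Poly_Mapping.keys a. \<Sum>k'\<in>Poly_Mapping.keys b. if k + k' = 0 then ?la k * ?lb k' else 0)"
    unfolding ab by (simp add: lookup_sum lookup_single_if)
  also have "\<dots> = (\<Sum>k\<in>Poly_Mapping.keys a. if k = 0 then (\<Sum>k'\<in>Poly_Mapping.keys b. if k' = 0 then ?la k * ?lb k' else 0) else 0)"
    by (rule sum.cong) (auto simp: pm_add_eq_0)
  also have "\<dots> = ?la 0 * ?lb 0"
    by (simp add: sum.delta' in_keys_iff)
  finally show ?thesis .
qed

lemma notin_Mset_lookup0:
  assumes p: "(p::'a::field mpoly) \<in> polyR N" "p \<notin> MIs N (Mset N)"
  shows "Poly_Mapping.lookup p 0 \<noteq> 0"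
proof -
  obtain k where k: "k \<in> Poly_Mapping.keys p" "\<not> (\<exists>s\<in>Mset N. mdvd s k)" using p by (auto simp: MIs_def)
  have "kok N k" using p(1) k(1) by (auto simp: polyR_def kok_def)
  then have "k = 0" using k(2) kok_nonzero_uv by blast
  then show ?thesis using k(1) by (simp add: in_keys_iff)
qed

lemma prime_Mset: "prime_ideal (polyR N) (MIs N (Mset N) :: 'a::field mpoly set)"
  unfolding prime_ideal_def
proof (intro conjI ballI impI)
  show "is_ideal (polyR N) (MIs N (Mset N) :: 'a mpoly set)" by (rule MIs_ideal)
  have "(1::'a mpoly) \<in> polyR N" by (simp add: polyR_def)
  moreover have "(1::'a mpoly) \<notin> MIs N (Mset N)" by (auto simp: MIs_def not_mdvd_uv_0)
  ultimately show "(MIs N (Mset N) :: 'a mpoly set) \<noteq> polyR N" by blast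
next
  fix a b :: "'a mpoly" assume ab: "a \<in> polyR N" "b \<in> polyR N" "a * b \<in> MIs N (Mset N)"
  show "a \<in> MIs N (Mset N) \<or> b \<in> MIs N (Mset N)"
  proof (rule ccontr)
    assume "\<not> ?thesis"
    then have "Poly_Mapping.lookup a 0 \<noteq> 0" "Poly_Mapping.lookup b 0 \<noteq> 0"
      using ab notin_Mset_lookup0 by blast+
    then have "Poly_Mapping.lookup (a * b) 0 \<noteq> 0" by (simp add: lookup_mult_zero)
    then have "0 \<in> Poly_Mapping.keys (a * b)" by (simp add: in_keys_iff)
    then show False using ab(3) by (auto simp: MIs_def not_mdvd_uv_0)
  qed
qed

lemma Var_image: "(Var ` X :: 'a::field mpoly set) = monom ` {uv i | i. i \<in> X}"
  by (auto simp: Var_def)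

lemma kok_uv: "i \<in> {1..N} \<Longrightarrow> kok N (uv i)"
  by (simp add: kok_def)

lemma Var_ideal: "M \<le> N \<Longrightarrow> ideal_gen (polyR N) (Var ` {1..M}) = (MIs N (Mset M) :: 'a::field mpoly set)"
  unfolding Var_image by (rule MIs_eq) (auto simp: kok_def)



definition dg :: "nat \<Rightarrow> (nat \<Rightarrow>\<^sub>0 nat) \<Rightarrow> nat" where
  "dg N m = (\<Sum>i\<in>{1..N}. Poly_Mapping.lookup m i)"

lemma dg_add: "dg N (a + b) = dg N a + dg N b"
  by (simp add: dg_def lookup_add sum.distrib)

lemma dg_mono: "mdvd a b \<Longrightarrow> dg N a \<le> dg N b"
  unfolding dg_def mdvd_def by (rule sum_mono) auto

lemma dg_zero[simp]: "dg N 0 = 0" by (simp add: dg_def)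

lemma dg_eq: assumes ab: "mdvd a b" and b: "kok N b" and d: "dg N a = dg N b" shows "a = b"
proof (rule ccontr)
  assume "a \<noteq> b"
  then obtain j where j: "Poly_Mapping.lookup a j \<noteq> Poly_Mapping.lookup b j" by (metis poly_mapping_eqI)
  then have lt: "Poly_Mapping.lookup a j < Poly_Mapping.lookup b j" using ab by (simp add: mdvd_def le_neq_implies_less)
  then have "j \<in> Poly_Mapping.keys b" by (simp add: in_keys_iff)
  then have jN: "j \<in> {1..N}" using b by (auto simp: kok_def)
  have "dg N a < dg N b" unfolding dg_def
    by (rule sum_strict_mono_ex1) (use ab lt jN in \<open>auto simp: mdvd_def\<close>)
  then show False using d by simp
qed

lemma dg_uv: "i \<in> {1..N} \<Longrightarrow> dg N (uv i) = 1"
  by (simp add: dg_def lookup_single_if)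

lemma dg_pos: assumes "kok N g" "g \<noteq> 0" shows "1 \<le> dg N g"
proof -
  obtain i where i: "i \<in> {1..N}" "mdvd (uv i) g" using kok_nonzero_uv[OF assms] by blast
  have "dg N (uv i) \<le> dg N g" using dg_mono[OF i(2)] .
  then show ?thesis using dg_uv[OF i(1)] by simp
qed

lemma sp_dg: assumes "\<forall>g\<in>G. 1 \<le> dg N g" shows "p \<in> sp G t \<Longrightarrow> t \<le> dg N p"
proof (induction t arbitrary: p)
  case 0 then show ?case by simp
next
  case (Suc t)
  then obtain a b where "p = a + b" "a \<in> sp G t" "b \<in> G" by (auto simp: msum_def)
  moreover have "1 \<le> dg N b" using assms \<open>b \<in> G\<close> by blast
  ultimately show ?case using Suc.IH[of a] by (simp add: dg_add)
qed

lemma sp_unit: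
  assumes G: "\<forall>g\<in>G. kok N g \<and> 1 \<le> dg N g" and i: "i \<in> {1..N}"
  shows "p \<in> sp G t \<Longrightarrow> dg N p = t \<Longrightarrow> 1 \<le> Poly_Mapping.lookup p i \<Longrightarrow> uv i \<in> G"
proof (induction t arbitrary: p)
  case 0 then show ?case by (simp)
next
  case (Suc t)
  then obtain a b where ab: "p = a + b" "a \<in> sp G t" "b \<in> G" by (auto simp: msum_def)
  have "t \<le> dg N a" using sp_dg[of G N a t] G ab(2) by blast
  moreover have "1 \<le> dg N b" using G ab(3) by blast
  moreover have "dg N a + dg N b = Suc t" using Suc.prems(2) ab(1) by (simp add: dg_add)
  ultimately have da: "dg N a = t" and db: "dg N b = 1" by linarith+
  show ?case
  proof (cases "1 \<le> Poly_Mapping.lookup a i")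
    case True then show ?thesis using Suc.IH[OF ab(2) da] by blast
  next
    case False
    then have "1 \<le> Poly_Mapping.lookup b i" using Suc.prems(3) ab(1) by (simp add: lookup_add)
    then have "mdvd (uv i) b" by (auto simp: mdvd_def lookup_single_if)
    moreover have "dg N (uv i) = dg N b" using db dg_uv[OF i] by simp
    ultimately have "uv i = b" using dg_eq G ab(3) by blast
    then show ?thesis using ab(3) by simp
  qed
qed

lemma sp_Nfree: assumes "\<forall>g\<in>G. Poly_Mapping.lookup g N = 0"
  shows "p \<in> sp G t \<Longrightarrow> Poly_Mapping.lookup p N = 0"
proof (induction t arbitrary: p)
  case 0 then show ?case by simp
next
  case (Suc t)
  then obtain a b where "p = a + b" "a \<in> sp G t" "b \<in> G" by (auto simp: msum_def)
  then show ?case using Suc.IH assms by (simp add: lookup_add)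
qed

lemma msum_mono: "A \<subseteq> A' \<Longrightarrow> B \<subseteq> B' \<Longrightarrow> msum A B \<subseteq> msum A' B'"
  unfolding msum_def by blast

lemma sp_mono: "G \<subseteq> H \<Longrightarrow> sp G t \<subseteq> sp H t"
  by (induction t) (simp_all add: msum_mono)

lemma sp_zero_N:
  assumes G: "\<forall>g\<in>G. Poly_Mapping.lookup g N = 0" and Y: "\<forall>y\<in>Y. Poly_Mapping.lookup y N \<noteq> 0"
  shows "p \<in> sp (G \<union> Y) t \<Longrightarrow> Poly_Mapping.lookup p N = 0 \<Longrightarrow> p \<in> sp G t"
proof (induction t arbitrary: p)
  case 0 then show ?case by simp
next
  case (Suc t)
  then obtain a b where ab: "p = a + b" "a \<in> sp (G \<union> Y) t" "b \<in> G \<union> Y" by (auto simp: msum_def)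
  then have "Poly_Mapping.lookup a N = 0" "Poly_Mapping.lookup b N = 0" using Suc.prems(2) by (auto simp: lookup_add)
  then have "a \<in> sp G t" "b \<in> G" using Suc.IH ab Y by auto
  then show ?case using ab(1) by (auto simp: msum_def)
qed

lemma sp_zero_in: "0 \<in> G \<Longrightarrow> 0 \<in> sp G t"
  by (induction t) (force simp: msum_def)+



abbreviation Yset :: "nat \<Rightarrow> (nat \<Rightarrow>\<^sub>0 nat) set" where
  "Yset n \<equiv> {uv (Suc n) + uv i | i. i \<in> {1..n}}"

lemma lookup_uv: "Poly_Mapping.lookup (uv i) j = (if i = j then 1 else 0)"
  by (simp add: lookup_single_if)

lemma sp_Y:
  assumes "N = Suc n"
  shows "kok N u \<Longrightarrow> Poly_Mapping.lookup u N = 0 \<Longrightarrow> s \<le> dg N u \<Longrightarrow>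
     \<exists>p\<in>sp (Yset n) s. mdvd p (Poly_Mapping.single N s + u)"
proof (induction s arbitrary: u)
  case 0 then show ?case by (simp add: mdvd_0)
next
  case (Suc s)
  then have "u \<noteq> 0" by auto
  then obtain i where i: "i \<in> {1..N}" "mdvd (uv i) u" using kok_nonzero_uv Suc.prems(1) by blast
  have "i \<noteq> N" using i(2) Suc.prems(2) by (auto simp: mdvd_def lookup_uv split: if_splits dest: spec[of _ i])
  then have iN: "i \<in> {1..n}" using i(1) assms by auto
  define u' where "u' = u - uv i"
  have uu: "uv i + u' = u" unfolding u'_def by (rule mdvd_minus[OF i(2)])
  have k': "kok N u'" unfolding u'_def by (rule kok_minus[OF Suc.prems(1)])
  have N': "Poly_Mapping.lookup u' N = 0" using Suc.prems(2) by (simp add: u'_def lookup_minus)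
  have "dg N u = 1 + dg N u'" using uu dg_add[of N "uv i" u'] dg_uv[OF i(1)] by simp
  then have d': "s \<le> dg N u'" using Suc.prems(3) by simp
  obtain p where p: "p \<in> sp (Yset n) s" "mdvd p (Poly_Mapping.single N s + u')" using Suc.IH[OF k' N' d'] by blast
  have "p + (uv (Suc n) + uv i) \<in> sp (Yset n) (Suc s)" using p(1) iN by (auto simp: msum_def)
  moreover have "Poly_Mapping.single N (Suc s) + u = (Poly_Mapping.single N s + u') + (uv (Suc n) + uv i)"
    unfolding poly_mapping_eq_iff fun_eq_iff
  proof
    fix x
    have "Poly_Mapping.lookup u x = Poly_Mapping.lookup (uv i) x + Poly_Mapping.lookup u' x"
      using uu by (metis lookup_add)
    then show "Poly_Mapping.lookup (Poly_Mapping.single N (Suc s) + u) x =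
      Poly_Mapping.lookup (Poly_Mapping.single N s + u' + (uv (Suc n) + uv i)) x"
      using assms by (simp add: lookup_add lookup_single_if)
  qed
  then have "mdvd (p + (uv (Suc n) + uv i)) (Poly_Mapping.single N (Suc s) + u)"
    using p(2) by (simp add: mdvd_add mdvd_refl)
  ultimately show ?case by blast
qed

lemma comb_main:
  assumes N: "N = Suc n"
    and G: "\<forall>g\<in>G. kok N g \<and> Poly_Mapping.lookup g N = 0"
    and v: "kok N v"
    and c1: "\<not> (\<exists>p\<in>sp G t. mdvd p v)"
    and c2: "\<forall>i\<in>{1..n}. \<exists>p\<in>sp G t. mdvd p (uv i + v)"
    and notq: "Mset n \<subseteq> G \<Longrightarrow> False"
  shows "\<exists>w. kok N w \<and> \<not> (\<exists>p\<in>sp (G \<union> Yset n) t. mdvd p w) \<and>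
             (\<forall>i\<in>{1..N}. \<exists>p\<in>sp (G \<union> Yset n) t. mdvd p (uv i + w))"
proof -
  define v' where "v' = v - Poly_Mapping.single N (Poly_Mapping.lookup v N)"
  have lv': "Poly_Mapping.lookup v' j = (if j = N then 0 else Poly_Mapping.lookup v j)" for j
    by (simp add: v'_def lookup_minus lookup_single_if)
  have kv': "kok N v'" unfolding v'_def by (rule kok_minus[OF v])
  have vv: "mdvd v' v" by (simp add: mdvd_def lv')
  have vN: "Poly_Mapping.lookup v' N = 0" by (simp add: lv')
  have G0: "0 \<notin> G" using sp_zero_in[of G t] c1 mdvd_0 by blast
  have Gdg: "\<forall>g\<in>G. kok N g \<and> 1 \<le> dg N g" using G G0 dg_pos by metis
  have GN: "\<forall>g\<in>G. Poly_Mapping.lookup g N = 0" using G by blast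
  have d1: "\<not> (\<exists>p\<in>sp G t. mdvd p v')" using c1 vv mdvd_trans by blast
  have d2: "\<exists>p\<in>sp G t. mdvd p (uv i + v')" if i: "i \<in> {1..n}" for i
  proof -
    obtain p where p: "p \<in> sp G t" "mdvd p (uv i + v)" using c2 i by blast
    have "Poly_Mapping.lookup p N = 0" using sp_Nfree[OF GN p(1)] .
    then have "mdvd p (uv i + v')" using p(2) by (auto simp: mdvd_def lookup_add lv')
    then show ?thesis using p(1) by blast
  qed
  have deg: "t \<le> dg N v'"
  proof (rule ccontr)
    assume lt: "\<not> t \<le> dg N v'"
    have "uv i \<in> G" if i: "i \<in> {1..n}" for i
    proof -
      obtain p where p: "p \<in> sp G t" "mdvd p (uv i + v')" using d2 i by blast
      have iN: "i \<in> {1..N}" using i N by auto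
      have "t \<le> dg N p" using sp_dg[of G N p t] Gdg p(1) by blast
      moreover have "dg N p \<le> dg N (uv i + v')" using dg_mono[OF p(2)] .
      moreover have "dg N (uv i + v') = 1 + dg N v'" using dg_add dg_uv[OF iN] by simp
      ultimately have e: "dg N p = dg N (uv i + v')" "dg N p = t" using lt by linarith+
      have "p = uv i + v'" using dg_eq[OF p(2) _ e(1)] keys_add_kok[OF kok_uv[OF iN] kv'] by blast
      then have "1 \<le> Poly_Mapping.lookup p i" by (simp add: lookup_add lookup_uv)
      then show "uv i \<in> G" using sp_unit[OF Gdg iN p(1) e(2)] by blast
    qed
    then show False using notq by blast
  qed
  define Z where "Z c \<longleftrightarrow> (\<exists>p\<in>sp (G \<union> Yset n) t. mdvd p (Poly_Mapping.single N c + v'))" for c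
  have Zt: "Z t"
  proof -
    obtain p where "p \<in> sp (Yset n) t" "mdvd p (Poly_Mapping.single N t + v')"
      using sp_Y[OF N kv' vN deg] by blast
    moreover have "sp (Yset n) t \<subseteq> sp (G \<union> Yset n) t" by (rule sp_mono) blast
    ultimately show ?thesis unfolding Z_def by blast
  qed
  have Z0: "\<not> Z 0"
  proof
    assume "Z 0"
    then obtain p where p: "p \<in> sp (G \<union> Yset n) t" "mdvd p v'" unfolding Z_def by auto
    have "Poly_Mapping.lookup p N = 0" using p(2) vN by (simp add: mdvd_def) (metis le_zero_eq)
    moreover have "\<forall>y\<in>Yset n. Poly_Mapping.lookup y N \<noteq> 0" using N by (auto simp: lookup_add lookup_uv)
    ultimately have "p \<in> sp G t" using sp_zero_N[OF GN _ p(1)] by blast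
    then show False using d1 p(2) by blast
  qed
  define c0 where "c0 = (LEAST c. Z c)"
  have Zc0: "Z c0" unfolding c0_def using Zt by (rule LeastI)
  have c0pos: "c0 \<noteq> 0"
  proof
    assume "c0 = 0" then show False using Zc0 Z0 by simp
  qed
  have nZ: "\<not> Z (c0 - 1)" using c0pos not_less_Least[of "c0 - 1" Z] unfolding c0_def by simp
  define w where "w = Poly_Mapping.single N (c0 - 1) + v'"
  have kw: "kok N w" unfolding w_def by (rule keys_add_kok) (use kv' N in \<open>auto simp: kok_def\<close>)
  have nw: "\<not> (\<exists>p\<in>sp (G \<union> Yset n) t. mdvd p w)" using nZ unfolding Z_def w_def by blast
  have "\<exists>p\<in>sp (G \<union> Yset n) t. mdvd p (uv i + w)" if i: "i \<in> {1..N}" for i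
  proof (cases "i = N")
    case True
    have "uv i + w = Poly_Mapping.single N c0 + v'"
      using True c0pos by (simp add: w_def poly_mapping_eq_iff lookup_add fun_eq_iff lookup_single_if)
    then show ?thesis using Zc0 unfolding Z_def by simp
  next
    case False
    then have "i \<in> {1..n}" using i N by auto
    then obtain p where p: "p \<in> sp G t" "mdvd p (uv i + v')" using d2 by blast
    have "sp G t \<subseteq> sp (G \<union> Yset n) t" by (rule sp_mono) blast
    moreover have "mdvd (uv i + v') (uv i + w)" unfolding w_def
      by (simp add: mdvd_def lookup_add)
    ultimately show ?thesis using p mdvd_trans by blast
  qed
  then show ?thesis using kw nw by blast
qed


lemma YS_kok: assumes NS: "N = Suc n" shows "Yset n \<subseteq> {s. kok N s}"
proof
  fix y assume "y \<in> Yset n"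
  then obtain i where i: "i \<in> {1..n}" "y = uv (Suc n) + uv i" by blast
  have a: "kok N (uv (Suc n))" using NS by (simp add: kok_def)
  have b: "kok N (uv i)" using i(1) NS by (simp add: kok_def)
  show "y \<in> {s. kok N s}" using keys_add_kok[OF a b] i(2) by simp
qed


lemma mingens_below:
  fixes I :: "'a::field mpoly set"
  shows "kok N a \<Longrightarrow> monom a \<in> I \<Longrightarrow> \<exists>g\<in>mingens N I. mdvd g a"
proof (induction "dg N a" arbitrary: a rule: less_induct)
  case less
  show ?case
  proof (cases "a \<in> mingens N I")
    case True then show ?thesis using mdvd_refl by blast
  next
    case False
    then obtain b where b: "Poly_Mapping.keys b \<subseteq> {1..N}" "(monom b :: 'a mpoly) \<in> I" "mdvd b a" "b \<noteq> a"
      using less.prems by (auto simp: mingens_def kok_def)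
    have "dg N b \<le> dg N a" using dg_mono[OF b(3)] .
    moreover have "dg N b \<noteq> dg N a" using dg_eq[OF b(3) less.prems(1)] b(4) by blast
    ultimately have "dg N b < dg N a" by simp
    then obtain g where "g \<in> mingens N I" "mdvd g b" using less.hyps[of b] b(1,2) by (auto simp: kok_def)
    then show ?thesis using b(3) mdvd_trans by blast
  qed
qed

theorem proposition3p2:
  fixes n t lam :: nat and I :: "'a::field mpoly set" and v :: "nat \<Rightarrow>\<^sub>0 nat"
  assumes monI: "is_monomial_ideal (n + 1) I"
    and gcd: "\<forall>u\<in>mingens (n + 1) I. Poly_Mapping.lookup u (n + 1) = 0"
    and Ineq: "I \<noteq> ideal_gen (polyR (n + 1)) (Var ` {1..n})"
    and t: "t \<ge> 1"
    and v: "Poly_Mapping.keys v \<subseteq> {1..n + 1}"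
    and col: "colon (polyR (n + 1)) (ideal_pow (polyR (n + 1)) I t) (monom v)
              = ideal_gen (polyR (n + 1)) (Var ` {1..n})"
    and lam: "lam \<in> {1..n}"
    and cond: "\<forall>f M. (\<forall>i<t. f i \<in> mingens (n + 1) I) \<and> Poly_Mapping.keys M \<subseteq> {1..n + 1} \<and>
                  Poly_Mapping.single lam 1 + v = (\<Sum>i<t. f i) + M \<longrightarrow>
                  (\<exists>j<t. Poly_Mapping.lookup (M + f j) lam \<ge> 1 \<and> M + f j \<noteq> Poly_Mapping.single lam 1)"
  shows "ideal_gen (polyR (n + 1)) (Var ` {1..n + 1})
         \<in> Ass (polyR (n + 1))
             (ideal_pow (polyR (n + 1))
                (ideal_gen (polyR (n + 1))
                   (I \<union> {Var (n + 1) * q | q. q \<in> ideal_gen (polyR (n + 1)) (Var ` {1..n})})) t)"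
proof -
  define N where "N = n + 1"
  define R where "R = (polyR N :: 'a mpoly set)"
  define G where "G = mingens N I"
  have NS: "N = Suc n" by (simp add: N_def)
  have Gk: "\<forall>g\<in>G. kok N g \<and> Poly_Mapping.lookup g N = 0"
    using gcd by (auto simp: G_def N_def mingens_def kok_def)
  have GkS: "G \<subseteq> {s. kok N s}" using Gk by blast
  have GI: "monom g \<in> I" if "g \<in> G" for g using that by (simp add: G_def mingens_def)
  have Iid: "is_ideal R I" using monI by (simp add: is_monomial_ideal_def R_def N_def)
  define A where "A = {a. kok N a \<and> (monom a :: 'a mpoly) \<in> I}"
  have "{monom a | a. Poly_Mapping.keys a \<subseteq> {1..N} \<and> monom a \<in> I} = (monom ` A :: 'a mpoly set)"
    by (auto simp: A_def kok_def)
  then have "I = ideal_gen R (monom ` A)" using monI by (simp add: is_monomial_ideal_def R_def N_def)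
  also have "\<dots> = MIs N A" unfolding R_def by (rule MIs_eq) (auto simp: A_def)
  also have "\<dots> = MIs N G"
  proof
    show "MIs N A \<subseteq> (MIs N G :: 'a mpoly set)"
    proof
      fix p :: "'a mpoly" assume p: "p \<in> MIs N A"
      have "\<forall>k\<in>Poly_Mapping.keys p. \<exists>s\<in>G. mdvd s k"
      proof
        fix k assume "k \<in> Poly_Mapping.keys p"
        then obtain a where a: "a \<in> A" "mdvd a k" using p by (auto simp: MIs_def)
        then obtain g where "g \<in> G" "mdvd g a" using mingens_below[of N a I] by (auto simp: A_def G_def)
        then show "\<exists>s\<in>G. mdvd s k" using a(2) mdvd_trans by blast
      qed
      then show "p \<in> MIs N G" using p by (simp add: MIs_def)
    qed
    show "MIs N G \<subseteq> (MIs N A :: 'a mpoly set)"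
      by (rule MIs_mono) (use Gk GI in \<open>auto simp: A_def\<close>)
  qed
  finally have IG: "I = MIs N G" .
  have Qid: "ideal_gen R (Var ` {1..n}) = (MIs N (Mset n) :: 'a mpoly set)"
    unfolding R_def by (rule Var_ideal) (simp add: N_def)
  have Mid: "ideal_gen R (Var ` {1..N}) = (MIs N (Mset N) :: 'a mpoly set)"
    unfolding R_def by (rule Var_ideal) simp
  have YS: "Yset n \<subseteq> {s. kok N s}" by (rule YS_kok[OF NS])
  have GYS: "G \<union> Yset n \<subseteq> {s. kok N s}" using GkS YS by blast
  define X where "X = {Var N * q | q. q \<in> ideal_gen R (Var ` {1..n})}"
  have VN: "(Var N :: 'a mpoly) \<in> MIs N {uv N}" unfolding Var_def by (rule monom_MIs) (auto simp: kok_def N_def)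
  have XM: "X \<subseteq> MIs N (G \<union> Yset n)"
  proof
    fix x :: "'a mpoly" assume "x \<in> X"
    then obtain q where q: "x = Var N * q" "q \<in> MIs N (Mset n)" using Qid by (auto simp: X_def)
    have "x \<in> MIs N (msum {uv N} (Mset n))" using MIs_mult[OF VN q(2)] q(1) by simp
    moreover have "msum {uv N} (Mset n) \<subseteq> G \<union> Yset n" using NS by (auto simp: msum_def)
    ultimately show "x \<in> MIs N (G \<union> Yset n)" using MIs_mono by blast
  qed
  have XR: "X \<subseteq> R" using XM by (auto simp: MIs_def R_def)
  have IR: "I \<subseteq> R" using Iid by (simp add: is_ideal_def)
  have Lid: "ideal_gen R (I \<union> X) = MIs N (G \<union> Yset n)"
  proof
    show "ideal_gen R (I \<union> X) \<subseteq> MIs N (G \<union> Yset n)"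
    proof (rule ideal_gen_least)
      show "I \<union> X \<subseteq> MIs N (G \<union> Yset n)" using XM IG MIs_mono[of G "G \<union> Yset n" N] by blast
      show "is_ideal R (MIs N (G \<union> Yset n))" unfolding R_def by (rule MIs_ideal)
    qed
    have "monom ` (G \<union> Yset n) \<subseteq> ideal_gen R (I \<union> X)"
    proof
      fix x :: "'a mpoly" assume "x \<in> monom ` (G \<union> Yset n)"
      then obtain y where y: "y \<in> G \<union> Yset n" "x = monom y" by (rule imageE)
      have "x \<in> I \<union> X"
      proof (cases "y \<in> G")
        case True then show ?thesis using GI y(2) by blast
      next
        case False
        then obtain i where "i \<in> {1..n}" "y = uv (Suc n) + uv i" using y(1) by blast
        then have 2: "i \<in> {1..n}" "x = monom (uv (Suc n) + uv i)" using y(2) by auto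
        have "(Var i :: 'a mpoly) \<in> ideal_gen R (Var ` {1..n})" using 2(1) ideal_gen_sup by blast
        moreover have "x = Var N * Var i" using 2(2) NS by (simp add: Var_def monom_mult)
        ultimately show ?thesis by (auto simp: X_def)
      qed
      then show "x \<in> ideal_gen R (I \<union> X)" using ideal_gen_sup by blast
    qed
    then have "ideal_gen R (monom ` (G \<union> Yset n)) \<subseteq> ideal_gen R (I \<union> X)"
      unfolding R_def by (rule ideal_gen_mono) (use IR XR R_def in blast)
    then show "MIs N (G \<union> Yset n) \<subseteq> ideal_gen R (I \<union> X)"
    proof -
      have "ideal_gen R (monom ` (G \<union> Yset n)) = (MIs N (G \<union> Yset n) :: 'a mpoly set)"
        unfolding R_def by (rule MIs_eq[OF GYS])
      then show ?thesis using \<open>ideal_gen R (monom ` (G \<union> Yset n)) \<subseteq> ideal_gen R (I \<union> X)\<close> by simp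
    qed
  qed
  have Lt: "ideal_pow R (ideal_gen R (I \<union> X)) t = MIs N (sp (G \<union> Yset n) t)"
    unfolding Lid unfolding R_def by (rule MIs_pow[OF GYS])
  have It: "ideal_pow R I t = MIs N (sp G t)"
    unfolding IG unfolding R_def by (rule MIs_pow[OF GkS])
  have col': "colon R (MIs N (sp G t)) (monom v) = MIs N (Mset n)"
    using col It Qid by (simp add: R_def N_def)
  have kv: "kok N v" using v by (simp add: kok_def N_def)
  have c1: "\<not> (\<exists>p\<in>sp G t. mdvd p v)"
  proof
    assume "\<exists>p\<in>sp G t. mdvd p v"
    then have "(monom v :: 'a mpoly) \<in> MIs N (sp G t)" using monom_MIs_iff[OF kv] by blast
    moreover have "(1::'a mpoly) \<in> R" by (simp add: R_def polyR_def)
    ultimately have "(1::'a mpoly) \<in> colon R (MIs N (sp G t)) (monom v)" by (simp add: colon_def)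
    then have "(1::'a mpoly) \<in> MIs N (Mset n)" using col' by simp
    then show False by (auto simp: MIs_def)
  qed
  have c2: "\<forall>i\<in>{1..n}. \<exists>p\<in>sp G t. mdvd p (uv i + v)"
  proof
    fix i assume i: "i \<in> {1..n}"
    have "(Var i :: 'a mpoly) \<in> MIs N (Mset n)" unfolding Var_def
      by (rule monom_MIs) (use i in \<open>auto simp: kok_def N_def\<close>)
    then have "(Var i :: 'a mpoly) * monom v \<in> MIs N (sp G t)" using col' by (auto simp: colon_def)
    then have "(monom (uv i + v) :: 'a mpoly) \<in> MIs N (sp G t)" by (simp add: Var_def monom_mult)
    moreover have "kok N (uv i + v)" using i kv by (intro keys_add_kok) (auto simp: kok_def N_def)
    ultimately show "\<exists>p\<in>sp G t. mdvd p (uv i + v)" using monom_MIs_iff by blast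
  qed
  have notq: False if Q: "Mset n \<subseteq> G"
  proof -
    have G0: "0 \<notin> G" using sp_zero_in[of G t] c1 mdvd_0 by blast
    have "MIs N G = (MIs N (Mset n) :: 'a mpoly set)"
    proof
      show "MIs N (Mset n) \<subseteq> (MIs N G :: 'a mpoly set)" using Q by (rule MIs_mono)
      show "MIs N G \<subseteq> (MIs N (Mset n) :: 'a mpoly set)"
      proof
        fix p :: "'a mpoly" assume p: "p \<in> MIs N G"
        have "\<forall>k\<in>Poly_Mapping.keys p. \<exists>s\<in>Mset n. mdvd s k"
        proof
          fix k assume "k \<in> Poly_Mapping.keys p"
          then obtain g where g: "g \<in> G" "mdvd g k" using p by (auto simp: MIs_def)
          have "g \<noteq> 0" using G0 g(1) by blast
          moreover have "kok N g" using Gk g(1) by blast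
          ultimately obtain i where i: "i \<in> {1..N}" "mdvd (uv i) g" using kok_nonzero_uv by blast
          have "i \<noteq> N" using i(2) Gk g(1) by (auto simp: mdvd_def lookup_uv dest: spec[of _ i])
          then have "i \<in> {1..n}" using i(1) NS by auto
          then show "\<exists>s\<in>Mset n. mdvd s k" using i(2) g(2) mdvd_trans by blast
        qed
        then show "p \<in> MIs N (Mset n)" using p by (simp add: MIs_def)
      qed
    qed
    then have "I = ideal_gen (polyR (n + 1)) (Var ` {1..n})" using IG Qid by (simp add: R_def N_def)
    then show False using Ineq by simp
  qed
  obtain w where w: "kok N w" "\<not> (\<exists>p\<in>sp (G \<union> Yset n) t. mdvd p w)"
    "\<forall>i\<in>{1..N}. \<exists>p\<in>sp (G \<union> Yset n) t. mdvd p (uv i + w)"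
    using comb_main[OF NS Gk kv c1 c2 notq] by blast
  have "colon R (MIs N (sp (G \<union> Yset n) t)) (monom w) = (MIs N (Mset N) :: 'a mpoly set)"
    unfolding R_def by (rule colon_MIs[OF w])
  moreover have "(monom w :: 'a mpoly) \<in> R" using w(1) by (simp add: R_def monom_polyR)
  moreover have "prime_ideal R (MIs N (Mset N) :: 'a mpoly set)" unfolding R_def by (rule prime_Mset)
  ultimately have "ideal_gen R (Var ` {1..N}) \<in> Ass R (ideal_pow R (ideal_gen R (I \<union> X)) t)"
    unfolding Ass_def Lt Mid by blast
  then show ?thesis by (simp add: R_def N_def X_def)
qed


end
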